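(* Let $(\mathcal C,\otimes,\mathbb I)$ be a monoidal category with pushouts, $(H,\Delta,\varepsilon)$ a coalgebra in $\mathcal C$, $(X,X\bullet H,\pi_X,\rho_X)$ a geometric partial $H$-comodule and $(Y,\delta)$ a global $H$-comodule. If $p:Y\to X$ is a morphism in $\mathcal C$ which is a morphism of geometric partial comodules $\mathcal I(Y)\to X$ (i.e. $\pi_X\circ(p\otimes H)\circ\delta=\rho_X\circ p$) and such that $X\bullet H$, with $\rho_X$ and $\pi_X$, is a pushout in $\mathcal C$ of $p:Y\to X$ and $(p\otimes H)\circ\delta:Y\to X\otimes H$, then $p$ is an epimorphism.
   Context: $\mathcal C$ is treated as strict monoidal; the identity of an object $X$ is also written $X$. A partial comodule datum is $(X,X\bullet H,\pi_X,\rho_X)$ with $\rho_X:X\to X\bullet H$ and $\pi_X:X\otimes H\to X\bullet H$ an epimorphism. For such a datum let: $(X\bullet H)\bullet H$ be the pushout of $\pi_X$ and $\rho_X\otimes H$, with coprojections $\rho_X\bullet H$ and $\pi_{X\bullet H}$; $X\bullet(H\otimes H)$ the pushout of $\pi_X$ and $X\otimes\Delta$, with coprojections $X\bullet\Delta$ and $\pi_{X,\Delta}:X\otimes H\otimes H\to X\bullet(H\otimes H)$; $X\bullet(H\bullet H)$ the pushout of $\pi_{X,\Delta}$ and $\pi_X\otimes H$, with coprojections $\pi'_X$ and $\pi'_{X,\Delta}$. A geometric partial $H$-comodule is a datum such that (GP1) there is $X\bullet\varepsilon:X\bullet H\to X$ with $(X\bullet\varepsilon)\circ\rho_X=\mathrm{id}_X$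 and $(X\bullet\varepsilon)\circ\pi_X=X\otimes\varepsilon$; (GP2) there is an isomorphism $\theta:X\bullet(H\bullet H)\to(X\bullet H)\bullet H$ with $\theta\circ\pi'_{X,\Delta}=\pi_{X\bullet H}$ and $(\rho_X\bullet H)\circ\rho_X=\theta\circ\pi'_X\circ(X\bullet\Delta)\circ\rho_X$. For a global comodule $(Y,\delta)$, $\mathcal I(Y)=(Y,Y\otimes H,\mathrm{id},\delta)$. *)

theory Defs
  imports Main
begin

text \<open>A strict monoidal category presented concretely: a set of objects, hom-sets,
composition (comp g f = g o f), identities, tensor on objects and on morphisms, unit.\<close>

record ('o, 'm) moncat =
  Ob :: "'o set"
  Hom :: "'o \<Rightarrow> 'o \<Rightarrow> 'm set"
  comp :: "'m \<Rightarrow> 'm \<Rightarrow> 'm"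
  idm :: "'o \<Rightarrow> 'm"
  tens_o :: "'o \<Rightarrow> 'o \<Rightarrow> 'o"
  tens_m :: "'m \<Rightarrow> 'm \<Rightarrow> 'm"
  unit_o :: "'o"

definition category :: "('o, 'm, 'z) moncat_scheme \<Rightarrow> bool" where
  "category C \<longleftrightarrow>
     (\<forall>A B f. f \<in> Hom C A B \<longrightarrow> A \<in> Ob C \<and> B \<in> Ob C) \<and>
     (\<forall>A B A' B' f. f \<in> Hom C A B \<longrightarrow> f \<in> Hom C A' B' \<longrightarrow> A = A' \<and> B = B') \<and>
     (\<forall>A \<in> Ob C. idm C A \<in> Hom C A A) \<and>
     (\<forall>A B D f g. f \<in> Hom C A B \<longrightarrow> g \<in> Hom C B D \<longrightarrow> comp C g f \<in> Hom C A D) \<and>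
     (\<forall>A B f. f \<in> Hom C A B \<longrightarrow> comp C (idm C B) f = f \<and> comp C f (idm C A) = f) \<and>
     (\<forall>A B D E f g h. f \<in> Hom C A B \<longrightarrow> g \<in> Hom C B D \<longrightarrow> h \<in> Hom C D E \<longrightarrow>
        comp C h (comp C g f) = comp C (comp C h g) f)"

definition strict_monoidal_category :: "('o, 'm, 'z) moncat_scheme \<Rightarrow> bool" where
  "strict_monoidal_category C \<longleftrightarrow>
     category C \<and>
     unit_o C \<in> Ob C \<and>
     (\<forall>A \<in> Ob C. \<forall>B \<in> Ob C. tens_o C A B \<in> Ob C) \<and>
     (\<forall>A B A' B' f g. f \<in> Hom C A B \<longrightarrow> g \<in> Hom C A' B' \<longrightarrow>
        tens_m C f g \<in> Hom C (tens_o C A A') (tens_o C B B')) \<and>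
     (\<forall>A \<in> Ob C. \<forall>B \<in> Ob C. tens_m C (idm C A) (idm C B) = idm C (tens_o C A B)) \<and>
     (\<forall>A B D A' B' D' f g f' g'. f \<in> Hom C A B \<longrightarrow> g \<in> Hom C B D \<longrightarrow>
        f' \<in> Hom C A' B' \<longrightarrow> g' \<in> Hom C B' D' \<longrightarrow>
        tens_m C (comp C g f) (comp C g' f') = comp C (tens_m C g g') (tens_m C f f')) \<and>
     (\<forall>A \<in> Ob C. \<forall>B \<in> Ob C. \<forall>D \<in> Ob C.
        tens_o C (tens_o C A B) D = tens_o C A (tens_o C B D)) \<and>
     (\<forall>A B A' B' A'' B'' f g h. f \<in> Hom C A B \<longrightarrow> g \<in> Hom C A' B' \<longrightarrow> h \<in> Hom C A'' B'' \<longrightarrow>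
        tens_m C (tens_m C f g) h = tens_m C f (tens_m C g h)) \<and>
     (\<forall>A \<in> Ob C. tens_o C (unit_o C) A = A \<and> tens_o C A (unit_o C) = A) \<and>
     (\<forall>A B f. f \<in> Hom C A B \<longrightarrow>
        tens_m C (idm C (unit_o C)) f = f \<and> tens_m C f (idm C (unit_o C)) = f)"

definition epi :: "('o, 'm, 'z) moncat_scheme \<Rightarrow> 'm \<Rightarrow> 'o \<Rightarrow> 'o \<Rightarrow> bool" where
  "epi C e A B \<longleftrightarrow> e \<in> Hom C A B \<and>
     (\<forall>Z f g. f \<in> Hom C B Z \<longrightarrow> g \<in> Hom C B Z \<longrightarrow> comp C f e = comp C g e \<longrightarrow> f = g)"

definition iso :: "('o, 'm, 'z) moncat_scheme \<Rightarrow> 'm \<Rightarrow> 'o \<Rightarrow> 'o \<Rightarrow> bool" where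
  "iso C f A B \<longleftrightarrow> f \<in> Hom C A B \<and>
     (\<exists>g \<in> Hom C B A. comp C g f = idm C A \<and> comp C f g = idm C B)"

definition is_pushout :: "('o, 'm, 'z) moncat_scheme \<Rightarrow> 'o \<Rightarrow> 'o \<Rightarrow> 'o \<Rightarrow> 'm \<Rightarrow> 'm \<Rightarrow>
    'o \<Rightarrow> 'm \<Rightarrow> 'm \<Rightarrow> bool" where
  "is_pushout C A B D f g P i j \<longleftrightarrow>
     f \<in> Hom C A B \<and> g \<in> Hom C A D \<and> i \<in> Hom C B P \<and> j \<in> Hom C D P \<and>
     comp C i f = comp C j g \<and>
     (\<forall>Z u v. u \<in> Hom C B Z \<longrightarrow> v \<in> Hom C D Z \<longrightarrow> comp C u f = comp C v g \<longrightarrow>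
        (\<exists>!k. k \<in> Hom C P Z \<and> comp C k i = u \<and> comp C k j = v))"

definition has_pushouts :: "('o, 'm, 'z) moncat_scheme \<Rightarrow> bool" where
  "has_pushouts C \<longleftrightarrow>
     (\<forall>A B D f g. f \<in> Hom C A B \<longrightarrow> g \<in> Hom C A D \<longrightarrow>
        (\<exists>P i j. is_pushout C A B D f g P i j))"

definition coalgebra :: "('o, 'm, 'z) moncat_scheme \<Rightarrow> 'o \<Rightarrow> 'm \<Rightarrow> 'm \<Rightarrow> bool" where
  "coalgebra C H \<Delta> \<epsilon> \<longleftrightarrow>
     H \<in> Ob C \<and> \<Delta> \<in> Hom C H (tens_o C H H) \<and> \<epsilon> \<in> Hom C H (unit_o C) \<and>
     comp C (tens_m C \<Delta> (idm C H)) \<Delta> = comp C (tens_m C (idm C H) \<Delta>) \<Delta> \<and>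
     comp C (tens_m C \<epsilon> (idm C H)) \<Delta> = idm C H \<and>
     comp C (tens_m C (idm C H) \<epsilon>) \<Delta> = idm C H"

definition global_comodule :: "('o, 'm, 'z) moncat_scheme \<Rightarrow> 'o \<Rightarrow> 'm \<Rightarrow> 'm \<Rightarrow>
    'o \<Rightarrow> 'm \<Rightarrow> bool" where
  "global_comodule C H \<Delta> \<epsilon> Y \<delta> \<longleftrightarrow>
     Y \<in> Ob C \<and> \<delta> \<in> Hom C Y (tens_o C Y H) \<and>
     comp C (tens_m C \<delta> (idm C H)) \<delta> = comp C (tens_m C (idm C Y) \<Delta>) \<delta> \<and>
     comp C (tens_m C (idm C Y) \<epsilon>) \<delta> = idm C Y"

definition partial_comodule_datum :: "('o, 'm, 'z) moncat_scheme \<Rightarrow> 'o \<Rightarrow>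
    'o \<Rightarrow> 'o \<Rightarrow> 'm \<Rightarrow> 'm \<Rightarrow> bool" where
  "partial_comodule_datum C H X XH \<pi> \<rho> \<longleftrightarrow>
     X \<in> Ob C \<and> XH \<in> Ob C \<and> \<rho> \<in> Hom C X XH \<and> epi C \<pi> (tens_o C X H) XH"

definition geometric_partial_comodule :: "('o, 'm, 'z) moncat_scheme \<Rightarrow> 'o \<Rightarrow> 'm \<Rightarrow> 'm \<Rightarrow>
    'o \<Rightarrow> 'o \<Rightarrow> 'm \<Rightarrow> 'm \<Rightarrow> bool" where
  "geometric_partial_comodule C H \<Delta> \<epsilon> X XH \<pi> \<rho> \<longleftrightarrow>
     partial_comodule_datum C H X XH \<pi> \<rho> \<and>
     \<comment> \<open>GP1\<close>
     (\<exists>e \<in> Hom C XH X. comp C e \<rho> = idm C X \<and> comp C e \<pi> = tens_m C (idm C X) \<epsilon>) \<and>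
     \<comment> \<open>GP2 (for a choice of the three pushouts; independent of the choice)\<close>
     (\<exists>XHH rhoH piXH XHtH XDelta piXD XHbH pi' pi'XD \<theta>.
        \<comment> \<open>(X\<bullet>H)\<bullet>H = XHH: pushout of \<pi> and \<rho>\<otimes>H, coprojections \<rho>\<bullet>H, \<pi>_{X\<bullet>H}\<close>
        is_pushout C (tens_o C X H) XH (tens_o C XH H) \<pi> (tens_m C \<rho> (idm C H))
          XHH rhoH piXH \<and>
        \<comment> \<open>X\<bullet>(H\<otimes>H) = XHtH: pushout of \<pi> and X\<otimes>\<Delta>, coprojections X\<bullet>\<Delta>, \<pi>_{X,\<Delta>}\<close>
        is_pushout C (tens_o C X H) XH (tens_o C X (tens_o C H H)) \<pi> (tens_m C (idm C X) \<Delta>)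
          XHtH XDelta piXD \<and>
        \<comment> \<open>X\<bullet>(H\<bullet>H) = XHbH: pushout of \<pi>_{X,\<Delta>} and \<pi>\<otimes>H, coprojections \<pi>'_X, \<pi>'_{X,\<Delta>}\<close>
        is_pushout C (tens_o C X (tens_o C H H)) XHtH (tens_o C XH H) piXD (tens_m C \<pi> (idm C H))
          XHbH pi' pi'XD \<and>
        iso C \<theta> XHbH XHH \<and>
        comp C \<theta> pi'XD = piXH \<and>
        comp C rhoH \<rho> = comp C \<theta> (comp C pi' (comp C XDelta \<rho>)))"

end

theory Submission
  imports Defs
begin

theorem lemma3p2:
  fixes C :: "('o, 'm) moncat"
    and H X XH Y :: 'o
    and \<Delta> \<epsilon> \<pi> \<rho> \<delta> p :: 'm
  assumes "strict_monoidal_category C"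
    and "has_pushouts C"
    and "coalgebra C H \<Delta> \<epsilon>"
    and "geometric_partial_comodule C H \<Delta> \<epsilon> X XH \<pi> \<rho>"
    and "global_comodule C H \<Delta> \<epsilon> Y \<delta>"
    and "p \<in> Hom C Y X"
    and "comp C \<pi> (comp C (tens_m C p (idm C H)) \<delta>) = comp C \<rho> p"
    and "is_pushout C Y X (tens_o C X H) p (comp C (tens_m C p (idm C H)) \<delta>) XH \<rho> \<pi>"
  shows "epi C p Y X"
proof -
  have cat: "category C" using assms(1) unfolding strict_monoidal_category_def by blast
  note cd = cat[unfolded category_def]
  note sm = assms(1)[unfolded strict_monoidal_category_def]
  have homob: "\<And>A B f. f \<in> Hom C A B \<Longrightarrow> A \<in> Ob C \<and> B \<in> Ob C" using cd by meson
  have idh: "\<And>A. A \<in> Ob C \<Longrightarrow> idm C A \<in> Hom C A A" using cd by meson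
  have cmp: "\<And>A B D f g. f \<in> Hom C A B \<Longrightarrow> g \<in> Hom C B D \<Longrightarrow> comp C g f \<in> Hom C A D"
    using cd by meson
  have idl: "\<And>A B f. f \<in> Hom C A B \<Longrightarrow> comp C (idm C B) f = f" using cd by meson
  have idr: "\<And>A B f. f \<in> Hom C A B \<Longrightarrow> comp C f (idm C A) = f" using cd by meson
  have ass: "\<And>A B D E f g h. f \<in> Hom C A B \<Longrightarrow> g \<in> Hom C B D \<Longrightarrow> h \<in> Hom C D E \<Longrightarrow>
        comp C h (comp C g f) = comp C (comp C h g) f" using cd by meson
  have tm: "\<And>A B A' B' f g. f \<in> Hom C A B \<Longrightarrow> g \<in> Hom C A' B' \<Longrightarrow>
        tens_m C f g \<in> Hom C (tens_o C A A') (tens_o C B B')" using sm by meson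
  have intch: "\<And>A B D A' B' D' f g f' g'. f \<in> Hom C A B \<Longrightarrow> g \<in> Hom C B D \<Longrightarrow>
        f' \<in> Hom C A' B' \<Longrightarrow> g' \<in> Hom C B' D' \<Longrightarrow>
        tens_m C (comp C g f) (comp C g' f') = comp C (tens_m C g g') (tens_m C f f')"
    using sm by meson
  have unito: "\<And>A. A \<in> Ob C \<Longrightarrow> tens_o C A (unit_o C) = A" using sm by meson
  have unitm: "\<And>A B f. f \<in> Hom C A B \<Longrightarrow> tens_m C f (idm C (unit_o C)) = f" using sm by meson
  have uob: "unit_o C \<in> Ob C" using sm by meson
  have H: "H \<in> Ob C" and eps: "\<epsilon> \<in> Hom C H (unit_o C)"
    using assms(3) unfolding coalgebra_def by blast+
  have Y: "Y \<in> Ob C" and del: "\<delta> \<in> Hom C Y (tens_o C Y H)"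
    and counit: "comp C (tens_m C (idm C Y) \<epsilon>) \<delta> = idm C Y"
    using assms(5) unfolding global_comodule_def by blast+
  have X: "X \<in> Ob C" using homob[OF assms(6)] by blast
  have piepi: "epi C \<pi> (tens_o C X H) XH"
    using assms(4) unfolding geometric_partial_comodule_def partial_comodule_datum_def by blast
  obtain e where e: "e \<in> Hom C XH X" "comp C e \<rho> = idm C X"
      "comp C e \<pi> = tens_m C (idm C X) \<epsilon>"
    using assms(4) unfolding geometric_partial_comodule_def by blast
  have rho: "\<rho> \<in> Hom C X XH" and pih: "\<pi> \<in> Hom C (tens_o C X H) XH"
    using assms(8) unfolding is_pushout_def by blast+
  define q where "q = comp C (tens_m C p (idm C H)) \<delta>"
  have pH: "tens_m C p (idm C H) \<in> Hom C (tens_o C Y H) (tens_o C X H)"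
    using tm[OF assms(6) idh[OF H]] .
  have q: "q \<in> Hom C Y (tens_o C X H)" unfolding q_def using cmp[OF del pH] .
  have Xe: "tens_m C (idm C X) \<epsilon> \<in> Hom C (tens_o C X H) X"
    using tm[OF idh[OF X] eps] unito[OF X] by simp
  have Ye: "tens_m C (idm C Y) \<epsilon> \<in> Hom C (tens_o C Y H) Y"
    using tm[OF idh[OF Y] eps] unito[OF Y] by simp
  have key1: "comp C (tens_m C (idm C X) \<epsilon>) (tens_m C p (idm C H)) = tens_m C p \<epsilon>"
    using intch[OF assms(6) idh[OF X] idh[OF H] eps] idl[OF assms(6)] idr[OF eps] by simp
  have key2: "tens_m C p \<epsilon> = comp C p (tens_m C (idm C Y) \<epsilon>)"
    using intch[OF idh[OF Y] assms(6) eps idh[OF uob]] idr[OF assms(6)] idl[OF eps]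
      unitm[OF assms(6)] by simp
  have key: "comp C (tens_m C (idm C X) \<epsilon>) q = p"
  proof -
    have "comp C (tens_m C (idm C X) \<epsilon>) q
        = comp C (comp C (tens_m C (idm C X) \<epsilon>) (tens_m C p (idm C H))) \<delta>"
      unfolding q_def using ass[OF del pH Xe] .
    also have "\<dots> = comp C (comp C p (tens_m C (idm C Y) \<epsilon>)) \<delta>" using key1 key2 by simp
    also have "\<dots> = comp C p (comp C (tens_m C (idm C Y) \<epsilon>) \<delta>)"
      using ass[OF del Ye assms(6)] by simp
    also have "\<dots> = p" using counit idr[OF assms(6)] by simp
    finally show ?thesis .
  qed
  show ?thesis unfolding epi_def
  proof (intro conjI allI impI)
    show "p \<in> Hom C Y X" by fact
    fix Z f g assume f: "f \<in> Hom C X Z" and g: "g \<in> Hom C X Z" and fg: "comp C f p = comp C g p"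
    have gXe: "comp C g (tens_m C (idm C X) \<epsilon>) \<in> Hom C (tens_o C X H) Z" using cmp[OF Xe g] .
    have compat: "comp C f p = comp C (comp C g (tens_m C (idm C X) \<epsilon>)) q"
      using fg ass[OF q Xe g] key by simp
    obtain k where k: "k \<in> Hom C XH Z" "comp C k \<rho> = f"
        "comp C k \<pi> = comp C g (tens_m C (idm C X) \<epsilon>)"
      using assms(8) f gXe compat unfolding is_pushout_def q_def by blast
    have ge: "comp C g e \<in> Hom C XH Z" using cmp[OF e(1) g] .
    have "comp C (comp C g e) \<pi> = comp C g (tens_m C (idm C X) \<epsilon>)"
      using ass[OF pih e(1) g] e(3) by simp
    hence "k = comp C g e" using piepi k(1,3) ge unfolding epi_def by metis
    hence "f = comp C (comp C g e) \<rho>" using k(2) by simp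
    also have "\<dots> = comp C g (comp C e \<rho>)" using ass[OF rho e(1) g] by simp
    also have "\<dots> = g" using e(2) idr[OF g] by simp
    finally show "f = g" .
  qed
qed

end
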